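(* Let $\mathbb S^1=\{z\in\mathbb C:|z|=1\}$, let $f:\mathbb S^1\to\mathbb S^1$ be $f(z)=z^2$, let $\rho(z)=e^{i\alpha}z$ with $\alpha/2\pi$ irrational, and let $g=\rho\circ f$. If $d$ is any metric on $\mathbb S^1$ inducing the standard topology of $\mathbb S^1$, then $\mathrm{Lip}(f,d)>1$ and $\mathrm{Lip}(g,d)>1$.
   Context: For a self-map $f$ of a metric space $(\mathbb X,d)$, $\mathrm{Lip}(f,d)=\sup_{x\neq y} d(f(x),f(y))/d(x,y)$. *)

theory Defs
  imports "HOL-Analysis.Analysis"
begin

definition Lip :: "'a set \<Rightarrow> ('a \<Rightarrow> 'a) \<Rightarrow> ('a \<Rightarrow> 'a \<Rightarrow> real) \<Rightarrow> ereal" where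
  "Lip S f d = (SUP p \<in> {(x,y). x \<in> S \<and> y \<in> S \<and> x \<noteq> y}.
                   ereal (d (f (fst p)) (f (snd p)) / d (fst p) (snd p)))"

end

theory Submission
  imports Defs
begin

context Metric_space
begin

lemma nonexp_surj_identifies:
  assumes tb: "mtotally_bounded M" and into: "\<And>x. x \<in> M \<Longrightarrow> h x \<in> M"
    and onto: "\<And>y. y \<in> M \<Longrightarrow> \<exists>x\<in>M. h x = y"
    and ne: "\<And>x y. x \<in> M \<Longrightarrow> y \<in> M \<Longrightarrow> d (h x) (h y) \<le> d x y"
    and a: "a \<in> M" and b: "b \<in> M" and hab: "h a = h b"
  shows "a = b"
proof (rule ccontr)
  assume "a \<noteq> b"
  define \<delta> where "\<delta> = d a b"
  have dpos: "\<delta> > 0" using \<open>a \<noteq> b\<close> a b mdist_pos_less \<delta>_def by blast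
  define pre where "pre x = (SOME y. y \<in> M \<and> h y = x)" for x
  have pre: "pre x \<in> M \<and> h (pre x) = x" if "x \<in> M" for x
    unfolding pre_def by (rule someI_ex) (use onto[OF that] in blast)
  define xs where "xs n = (pre ^^ n) a" for n
  define ys where "ys n = (pre ^^ n) b" for n
  have xsM: "xs n \<in> M" for n by (induction n) (auto simp: xs_def a pre)
  have ysM: "ys n \<in> M" for n by (induction n) (auto simp: ys_def b pre)
  have xs0: "xs 0 = a" "ys 0 = b" by (simp_all add: xs_def ys_def)
  have xsS: "xs (Suc n) = pre (xs n)" "ys (Suc n) = pre (ys n)" for n
    by (simp_all add: xs_def ys_def)
  have itM: "(h ^^ k) x \<in> M" if "x \<in> M" for k x
    using that by (induction k) (auto simp: into)
  have itne0: "\<forall>x y. x \<in> M \<longrightarrow> y \<in> M \<longrightarrow> d ((h ^^ k) x) ((h ^^ k) y) \<le> d x y" for k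
  proof (induction k)
    case 0 then show ?case by simp
  next
    case (Suc k)
    show ?case
    proof (intro allI impI)
      fix x y assume that: "x \<in> M" "y \<in> M"
      have "d ((h ^^ Suc k) x) ((h ^^ Suc k) y) \<le> d ((h ^^ k) x) ((h ^^ k) y)"
        using ne itM that by simp
      then show "d ((h ^^ Suc k) x) ((h ^^ Suc k) y) \<le> d x y" using Suc that by fastforce
    qed
  qed
  have itne: "d ((h ^^ k) x) ((h ^^ k) y) \<le> d x y" if "x \<in> M" "y \<in> M" for x y k
    using itne0 that by blast
  have xsit: "(h ^^ k) (xs (j + k)) = xs j \<and> (h ^^ k) (ys (j + k)) = ys j" for j k
  proof (induction k)
    case 0 then show ?case by simp
  next
    case (Suc k)
    then show ?case
      by (simp only: funpow_Suc_right o_apply add_Suc_right xsS pre[OF xsM] pre[OF ysM])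
  qed
  have xsit2: "(h ^^ k) (xs (j + k)) = xs j" "(h ^^ k) (ys (j + k)) = ys j" for j k
    using xsit by blast+
  have big: "\<delta> \<le> d (xs j) (ys j)" for j
    using itne[OF xsM[of j] ysM[of j], of j] xsit2[of j 0] xs0 unfolding \<delta>_def by simp
  define \<epsilon> where "\<epsilon> = \<delta> / 4"
  have epos: "\<epsilon> > 0" using dpos \<epsilon>_def by simp
  obtain K where K: "finite K" "K \<subseteq> M" "M \<subseteq> (\<Union>x\<in>K. mball x \<epsilon>)"
    using tb epos unfolding mtotally_bounded_def by meson
  define c where "c x = (SOME p. p \<in> K \<and> x \<in> mball p \<epsilon>)" for x
  have c: "c x \<in> K \<and> x \<in> mball (c x) \<epsilon>" if xM: "x \<in> M" for x
  proof -
    obtain p where "p \<in> K" "x \<in> mball p \<epsilon>" using K(3) xM by blast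
    then show ?thesis unfolding c_def by (metis (mono_tags, lifting) someI)
  qed
  define F where "F n = (c (xs n), c (ys n))" for n
  have "F ` UNIV \<subseteq> K \<times> K" using c xsM ysM by (auto simp: F_def)
  hence "finite (F ` UNIV)" using K(1) finite_subset by blast
  hence "\<not> inj F" using finite_imageD infinite_UNIV_nat by blast
  then obtain k l where kl: "k \<noteq> l" "F k = F l" unfolding inj_def by blast
  have close: "d (xs k) (xs l) < 2 * \<epsilon> \<and> d (ys k) (ys l) < 2 * \<epsilon>"
    if "F k = F l" for k l
  proof -
    have "c (xs k) = c (xs l)" "c (ys k) = c (ys l)" using that by (auto simp: F_def)
    then show ?thesis using c[OF xsM, of k] c[OF xsM, of l] c[OF ysM, of k] c[OF ysM, of l]
      triangle[of "xs k" "c (xs k)" "xs l"] triangle[of "ys k" "c (ys k)" "ys l"]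
      commute[of "xs k" "c (xs k)"] commute[of "ys k" "c (ys k)"]
      by (auto simp: mball_def)
  qed
  obtain k m where km: "m > 0" "F k = F (k + m)"
  proof (cases "k < l")
    case True then show ?thesis using that[of "l-k" k] kl by auto
  next
    case False then have "l < k" using kl(1) by linarith
    then show ?thesis using that[of "k-l" l] kl by auto
  qed
  have cl: "d (xs k) (xs (k+m)) < 2 * \<epsilon>" "d (ys k) (ys (k+m)) < 2 * \<epsilon>"
    using close[OF km(2)] by auto
  have "d a (xs m) < 2 * \<epsilon>"
  proof -
    have e1: "(h^^k) (xs k) = a" "(h^^k) (xs (k+m)) = xs m"
      using xsit2(1)[of k 0] xsit2(1)[of k m] xs0 by (simp, metis add.commute)
    show ?thesis using itne[OF xsM[of k] xsM[of "k+m"], of k] cl e1 by simp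
  qed
  moreover have "d b (ys m) < 2 * \<epsilon>"
  proof -
    have e1: "(h^^k) (ys k) = b" "(h^^k) (ys (k+m)) = ys m"
      using xsit2(2)[of k 0] xsit2(2)[of k m] xs0 by (simp, metis add.commute)
    show ?thesis using itne[OF ysM[of k] ysM[of "k+m"], of k] cl e1 by simp
  qed
  moreover obtain m' where m': "m = Suc m'" using km(1) not0_implies_Suc by blast
  have hx: "h (xs m) = xs m'" "h (ys m) = ys m'" unfolding m' xsS using pre[OF xsM[of m']] pre[OF ysM[of m']] by auto
  have "d (h a) (xs m') \<le> d a (xs m)" using ne[OF a xsM] hx by metis
  moreover have "d (h a) (ys m') \<le> d b (ys m)" using ne[OF b ysM] hx hab by metis
  moreover have "d (xs m') (ys m') \<le> d (xs m') (h a) + d (h a) (ys m')"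
    using triangle[OF xsM[of m'] into[OF a] ysM[of m']] .
  ultimately have "d (xs m') (ys m') < 4 * \<epsilon>" using commute[of "xs m'" "h a"] by linarith
  with big[of m'] show False by (simp add: \<epsilon>_def)
qed

end

lemma Lip_gt1:
  assumes met: "Metric_space M d" and tb: "Metric_space.mtotally_bounded M d M"
    and into: "\<And>x. x \<in> M \<Longrightarrow> h x \<in> M"
    and onto: "\<And>y. y \<in> M \<Longrightarrow> \<exists>x\<in>M. h x = y"
    and a: "a \<in> M" and b: "b \<in> M" and ab: "a \<noteq> b" and hab: "h a = h b"
  shows "Lip M h d > 1"
proof (rule ccontr)
  interpret Metric_space M d by (rule met)
  assume "\<not> Lip M h d > 1"
  hence L: "Lip M h d \<le> 1" by simp
  have ne: "d (h x) (h y) \<le> d x y" if "x \<in> M" "y \<in> M" for x y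
  proof (cases "x = y")
    case True then show ?thesis using into that by simp
  next
    case False
    have mem: "(x,y) \<in> {(x,y). x \<in> M \<and> y \<in> M \<and> x \<noteq> y}" using that False by simp
    have "ereal (d (h x) (h y) / d x y) \<le> Lip M h d"
      using SUP_upper[OF mem, of "\<lambda>p. ereal (d (h (fst p)) (h (snd p)) / d (fst p) (snd p))"]
      unfolding Lip_def by simp
    with L have "ereal (d (h x) (h y) / d x y) \<le> 1" by (meson order_trans)
    hence "d (h x) (h y) / d x y \<le> 1" by (simp add: one_ereal_def)
    moreover have "d x y > 0" using False that mdist_pos_less by blast
    ultimately show ?thesis by (simp add: divide_le_eq)
  qed
  have "a = b" by (rule nonexp_surj_identifies[OF tb into onto ne a b hab])
  with ab show False by simp
qed

lemma sphere_sq_onto: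
  fixes c :: complex assumes c: "norm c = 1" and y: "y \<in> sphere 0 1"
  shows "\<exists>x\<in>sphere 0 1. c * x ^ 2 = y"
proof -
  have c0: "c \<noteq> 0" using c by auto
  define x where "x = csqrt (y / c)"
  have "c * x ^ 2 = y" using c0 by (simp add: x_def)
  moreover have "norm x = 1" using c y by (simp add: x_def norm_divide)
  ultimately show ?thesis by auto
qed

lemma sphere_sq_into:
  fixes c :: complex assumes c: "norm c = 1" and x: "x \<in> sphere 0 1"
  shows "c * x ^ 2 \<in> sphere 0 1"
  using c x by (simp add: norm_mult norm_power)

theorem mainTheorem1:
  fixes \<alpha> :: real and d :: "complex \<Rightarrow> complex \<Rightarrow> real"
  assumes irr: "\<alpha> / (2 * pi) \<notin> \<rat>"
    and met: "Metric_space (sphere 0 1) d"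
    and top: "Metric_space.mtopology (sphere 0 1) d = top_of_set (sphere (0::complex) 1)"
  shows "Lip (sphere 0 1) (\<lambda>z. z ^ 2) d > 1
       \<and> Lip (sphere 0 1) (\<lambda>z. exp (\<i> * complex_of_real \<alpha>) * z ^ 2) d > 1"
proof -
  interpret Metric_space "sphere 0 1" d by (rule met)
  have "compact_space (top_of_set (sphere (0::complex) 1))"
    by (rule compact_space_subtopology) (simp add: compactin_euclidean_iff)
  hence "compact_space mtopology" using top by simp
  hence tb: "mtotally_bounded (sphere 0 1)"
    using compact_space_eq_mcomplete_mtotally_bounded by blast
  have pm: "(1::complex) \<in> sphere 0 1" "(-1::complex) \<in> sphere 0 1" "(1::complex) \<noteq> -1" by auto
  have n1: "norm (exp (\<i> * complex_of_real \<alpha>)) = 1" by (simp add: norm_exp)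
  have o1: "\<exists>x\<in>sphere 0 1. x ^ 2 = y" if yS: "y \<in> sphere (0::complex) 1" for y
    using sphere_sq_onto[OF norm_one yS] by simp
  have m1: "(-1::complex)^2 = 1^2" by simp
  have A: "Lip (sphere 0 1) (\<lambda>z. z ^ 2) d > 1"
    by (rule Lip_gt1[OF met tb _ o1 pm]) (auto simp: norm_power)
  have B: "Lip (sphere 0 1) (\<lambda>z. exp (\<i> * complex_of_real \<alpha>) * z ^ 2) d > 1"
    by (rule Lip_gt1[OF met tb sphere_sq_into[OF n1] sphere_sq_onto[OF n1] pm]) simp_all
  show ?thesis using A B by blast
qed

end
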